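(* For each positive integer $n\ge 4$, there exists a family of $n$ sidigraphs of order $4^n$ which are pairwise cospectral, each having only integer eigenvalues, and each being strongly connected, non symmetric and non cycle balanced.
   Context: A sidigraph is a digraph (no loops, at most one arc from $u$ to $v$) with a sign $\pm1$ on each arc; its adjacency matrix has entry $\sigma(v_i,v_j)$ if there is an arc from $v_i$ to $v_j$ and $0$ otherwise, and its eigenvalues/spectrum are those of this matrix (spectrum as a multiset). Two sidigraphs are cospectral if they have the same spectrum. A sidigraph is strongly connected if its underlying digraph is. It is symmetric if whenever $(u,v)$ is an arc, $(v,u)$ is an arc with the same sign. The sign of a cycle is the product of the signs of its arcs; a sidigraph is cycle balanced if every directed cycle is positive, non cycle balanced otherwise. *)

theory Defs
  imports "Jordan_Normal_Form.Char_Poly" "HOL-Computational_Algebra.Polynomial"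
begin

text \<open>A sidigraph of order N is represented by its signed adjacency matrix,
an N x N integer matrix on vertex set {0..<N}: entry (i,j) is the sign
(+1 or -1) of the arc from i to j if it exists and 0 otherwise; no loops.\<close>

definition sidigraph :: "nat \<Rightarrow> int mat \<Rightarrow> bool" where
  "sidigraph N A \<longleftrightarrow> A \<in> carrier_mat N N \<and>
     (\<forall>i<N. \<forall>j<N. A $$ (i,j) \<in> {-1,0,1}) \<and> (\<forall>i<N. A $$ (i,i) = 0)"

definition arc :: "int mat \<Rightarrow> nat \<Rightarrow> nat \<Rightarrow> bool" where
  "arc A i j \<longleftrightarrow> i < dim_row A \<and> j < dim_col A \<and> A $$ (i,j) \<noteq> 0"

definition spectrum_sd :: "int mat \<Rightarrow> complex multiset" where
  "spectrum_sd A = proots (char_poly (map_mat complex_of_int A))"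

definition cospectral :: "int mat \<Rightarrow> int mat \<Rightarrow> bool" where
  "cospectral A B \<longleftrightarrow> spectrum_sd A = spectrum_sd B"

definition integral_spectrum :: "int mat \<Rightarrow> bool" where
  "integral_spectrum A \<longleftrightarrow> (\<forall>x \<in># spectrum_sd A. x \<in> \<int>)"

definition strongly_connected :: "int mat \<Rightarrow> bool" where
  "strongly_connected A \<longleftrightarrow>
     (\<forall>u<dim_row A. \<forall>v<dim_row A. (u,v) \<in> {(i,j). arc A i j}\<^sup>*)"

definition symmetric_sd :: "int mat \<Rightarrow> bool" where
  "symmetric_sd A \<longleftrightarrow> (\<forall>u<dim_row A. \<forall>v<dim_row A. arc A u v \<longrightarrow> A $$ (v,u) = A $$ (u,v))"

definition dcycle :: "int mat \<Rightarrow> nat list \<Rightarrow> bool" where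
  "dcycle A vs \<longleftrightarrow> length vs \<ge> 2 \<and> distinct vs \<and>
     (\<forall>i<length vs. arc A (vs ! i) (vs ! ((i + 1) mod length vs)))"

definition cycle_sign :: "int mat \<Rightarrow> nat list \<Rightarrow> int" where
  "cycle_sign A vs = (\<Prod>i<length vs. A $$ (vs ! i, vs ! ((i + 1) mod length vs)))"

definition cycle_balanced :: "int mat \<Rightarrow> bool" where
  "cycle_balanced A \<longleftrightarrow> (\<forall>vs. dcycle A vs \<longrightarrow> cycle_sign A vs = 1)"

definition isomorphic_sd :: "int mat \<Rightarrow> int mat \<Rightarrow> bool" where
  "isomorphic_sd A B \<longleftrightarrow> dim_row A = dim_row B \<and>
     (\<exists>p. p permutes {0..<dim_row A} \<and>
        (\<forall>i<dim_row A. \<forall>j<dim_row A. B $$ (p i, p j) = A $$ (i,j)))"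

end

theory Submission
  imports Defs
begin

definition sg :: "nat \<Rightarrow> int" where "sg i = (if even i then 1 else -1)"
definition Bk :: "nat \<Rightarrow> nat \<Rightarrow> nat \<Rightarrow> int" where
  "Bk k x y = (if x \<noteq> y \<and> \<not> (x = 0 \<and> 1 \<le> y \<and> y \<le> k) then 1 else 0)"
definition Am :: "nat \<Rightarrow> nat \<Rightarrow> int mat" where
  "Am k m = mat (2*m) (2*m) (\<lambda>(i,j). sg i * Bk k (i div 2) (j div 2))"

lemma pair_sum: "(\<Sum>j<2*m. (f :: nat \<Rightarrow> 'a::comm_monoid_add) j) = (\<Sum>y<m. f (2*y) + f (2*y+1))"
proof (induction m)
  case 0 then show ?case by simp
next
  case (Suc m)
  have "2 * Suc m = Suc (Suc (2*m))" by simp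
  then show ?case using Suc by (simp add: add.assoc)
qed

lemma sg_sum: "(\<Sum>j<2*m. sg j * g (j div 2)) = (0::int)"
  by (simp add: pair_sum sg_def)

lemma Am_sq: "Am k m * Am k m = 0\<^sub>m (2*m) (2*m)"
proof (rule eq_matI)
  fix i j assume i: "i < dim_row (0\<^sub>m (2*m) (2*m) :: int mat)" and j: "j < dim_col (0\<^sub>m (2*m) (2*m) :: int mat)"
  have "(Am k m * Am k m) $$ (i,j) = (\<Sum>l<2*m. sg i * Bk k (i div 2) (l div 2) * (sg l * Bk k (l div 2) (j div 2)))"
    using i j by (simp add: Am_def scalar_prod_def lessThan_atLeast0)
  also have "\<dots> = sg i * (\<Sum>l<2*m. sg l * (\<lambda>y. Bk k (i div 2) y * Bk k y (j div 2)) (l div 2))"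
    by (simp add: sum_distrib_left algebra_simps)
  also have "\<dots> = 0" using sg_sum[of "\<lambda>y. Bk k (i div 2) y * Bk k y (j div 2)" m] by simp
  finally show "(Am k m * Am k m) $$ (i,j) = 0\<^sub>m (2*m) (2*m) $$ (i,j)" using i j by simp
qed (auto simp: Am_def)

lemma nil_eig: fixes C :: "complex mat"
  assumes C: "C \<in> carrier_mat N N" and sq: "C * C = 0\<^sub>m N N" and ev: "eigenvalue C a"
  shows "a = 0"
proof -
  from ev obtain v where v: "eigenvector C v a" unfolding eigenvalue_def by blast
  have "C ^\<^sub>m 2 *\<^sub>v v = a^2 \<cdot>\<^sub>v v" by (rule eigenvector_pow[OF C v])
  moreover have "C ^\<^sub>m 2 = 0\<^sub>m N N" using sq by (simp add: numeral_2_eq_2)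
  moreover have vc: "v \<in> carrier_vec N" "v \<noteq> 0\<^sub>v N" using v C unfolding eigenvector_def by auto
  moreover have "0\<^sub>m N N *\<^sub>v v = 0\<^sub>v N" using vc(1) by (intro eq_vecI) (auto simp: scalar_prod_def)
  ultimately have eq: "a^2 \<cdot>\<^sub>v v = 0\<^sub>v N" by simp
  from vc obtain i where i: "i < N" "v $ i \<noteq> 0" by (metis carrier_vecD eq_vecI index_zero_vec(1,2))
  have "(a^2 \<cdot>\<^sub>v v) $ i = 0" using eq i by simp
  hence "a^2 * v $ i = 0" using i vc by simp
  thus ?thesis using i by simp
qed

lemma nil_charpoly: fixes C :: "complex mat"
  assumes C: "C \<in> carrier_mat N N" and sq: "C * C = 0\<^sub>m N N"
  shows "char_poly C = [:0,1:]^N"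
proof -
  obtain as where as: "char_poly C = (\<Prod>a\<leftarrow>as. [:- a, 1:])" "length as = N"
    using char_poly_factorized[OF C] by blast
  have "\<forall>a\<in>set as. a = 0"
  proof
    fix a assume a: "a \<in> set as"
    have "poly (char_poly C) a = 0" unfolding as(1) using a
      by (simp add: poly_prod_list_zero_iff)
    hence "eigenvalue C a" using eigenvalue_root_char_poly[OF C] by simp
    thus "a = 0" by (rule nil_eig[OF C sq])
  qed
  hence "as = replicate N 0" using as(2) by (metis replicate_length_same)
  thus ?thesis using as(1) by (simp add: prod_list_replicate)
qed

lemma Am_carrier: "Am k m \<in> carrier_mat (2*m) (2*m)" by (simp add: Am_def)

lemma Am_spec: "spectrum_sd (Am k m) = replicate_mset (2*m) 0"
proof -
  let ?C = "map_mat complex_of_int (Am k m)"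
  have C: "?C \<in> carrier_mat (2*m) (2*m)" by (simp add: Am_def)
  have "?C * ?C = map_mat complex_of_int (Am k m * Am k m)"
    using of_int_hom.mat_hom_mult[OF Am_carrier Am_carrier, of k m k] by (rule sym)
  also have "\<dots> = 0\<^sub>m (2*m) (2*m)" by (simp add: Am_sq) (rule eq_matI, auto)
  finally have "char_poly ?C = [:0,1:]^(2*m)" using nil_charpoly[OF C] by blast
  thus ?thesis unfolding spectrum_sd_def by (simp add: proots_power)
qed

lemma Am_sidigraph: "sidigraph (2*m) (Am k m)"
  unfolding sidigraph_def by (auto simp: Am_def sg_def Bk_def)

lemma arc_Am: "arc (Am k m) i j \<longleftrightarrow> i < 2*m \<and> j < 2*m \<and> Bk k (i div 2) (j div 2) \<noteq> 0"
  unfolding arc_def by (auto simp: Am_def sg_def split: if_splits)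

lemma arcI: "i < 2*m \<Longrightarrow> j < 2*m \<Longrightarrow> i div 2 \<noteq> j div 2 \<Longrightarrow> \<not> (i div 2 = 0 \<and> 1 \<le> j div 2 \<and> j div 2 \<le> k)
   \<Longrightarrow> (i,j) \<in> {(i,j). arc (Am k m) i j}\<^sup>*"
  by (rule r_into_rtrancl) (simp add: arc_Am Bk_def)

lemma to_hub: assumes m: "4 \<le> m" "k + 2 \<le> m" and u: "u < 2*m"
  shows "(u,2) \<in> {(i,j). arc (Am k m) i j}\<^sup>*"
proof -
  let ?R = "{(i,j). arc (Am k m) i j}"
  consider "u div 2 = 0" | "u div 2 = 1" | "u div 2 \<noteq> 0" "u div 2 \<noteq> 1" by blast
  then show ?thesis
  proof cases
    case 1
    have "(u, 2*(m-1)) \<in> ?R\<^sup>*" using m u 1 by (intro arcI) auto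
    moreover have "(2*(m-1), 2) \<in> ?R\<^sup>*" using m by (intro arcI) auto
    ultimately show ?thesis by (rule rtrancl_trans)
  next
    case 2
    have "(u, 4) \<in> ?R\<^sup>*" using m u 2 by (intro arcI) auto
    moreover have "(4, 2) \<in> ?R\<^sup>*" using m by (intro arcI) auto
    ultimately show ?thesis by (rule rtrancl_trans)
  next
    case 3
    show ?thesis using m u 3 by (intro arcI) auto
  qed
qed

lemma from_hub: assumes m: "4 \<le> m" "k + 2 \<le> m" and v: "v < 2*m"
  shows "(2,v) \<in> {(i,j). arc (Am k m) i j}\<^sup>*"
proof (cases "v div 2 = 1")
  case True
  let ?R = "{(i,j). arc (Am k m) i j}"
  have "(2, 4) \<in> ?R\<^sup>*" using m by (intro arcI) auto
  moreover have "(4, v) \<in> ?R\<^sup>*" using m v True by (intro arcI) auto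
  ultimately show ?thesis by (rule rtrancl_trans)
next
  case False
  then show ?thesis using m v by (intro arcI) auto
qed

lemma Am_sc: assumes "4 \<le> m" "k + 2 \<le> m" shows "strongly_connected (Am k m)"
  unfolding strongly_connected_def
proof (intro allI impI)
  fix u v assume "u < dim_row (Am k m)" "v < dim_row (Am k m)"
  hence "u < 2*m" "v < 2*m" by (auto simp: Am_def)
  from rtrancl_trans[OF to_hub[OF assms this(1)] from_hub[OF assms this(2)]]
  show "(u, v) \<in> {(i, j). arc (Am k m) i j}\<^sup>*" .
qed

lemma Am_nsym: assumes "4 \<le> m" shows "\<not> symmetric_sd (Am k m)"
proof -
  have "arc (Am k m) 2 5" using assms by (simp add: arc_Am Bk_def)
  moreover have "Am k m $$ (5,2) \<noteq> Am k m $$ (2,5)" using assms by (simp add: Am_def Bk_def sg_def)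
  moreover have "2 < dim_row (Am k m)" "5 < dim_row (Am k m)" using assms by (auto simp: Am_def)
  ultimately show ?thesis unfolding symmetric_sd_def by blast
qed

lemma Am_nbal: assumes "4 \<le> m" shows "\<not> cycle_balanced (Am k m)"
proof -
  have a1: "arc (Am k m) 2 5" "arc (Am k m) 5 2" using assms by (simp_all add: arc_Am Bk_def)
  have "dcycle (Am k m) [2,5]" unfolding dcycle_def
  proof (intro conjI allI impI)
    fix i assume "i < length [2::nat,5]"
    hence "i = 0 \<or> i = 1" by auto
    thus "arc (Am k m) ([2,5] ! i) ([2,5] ! ((i + 1) mod length [2::nat,5]))" using a1 by auto
  qed auto
  moreover have "cycle_sign (Am k m) [2,5] = -1"
  proof -
    have e: "{..<length [2::nat,5]} = {0,1}" by auto
    have v: "Am k m $$ (2,5) = 1" "Am k m $$ (5,2) = -1" using assms by (simp_all add: Am_def Bk_def sg_def)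
    show ?thesis unfolding cycle_sign_def e using v by simp
  qed
  ultimately show ?thesis unfolding cycle_balanced_def by force
qed


definition W :: "int mat \<Rightarrow> int" where
  "W A = (\<Sum>i<dim_row A. \<Sum>j<dim_row A. \<bar>A $$ (i,j)\<bar>)"

lemma iso_W: assumes "isomorphic_sd A B" shows "W A = W B"
proof -
  from assms obtain p where d: "dim_row A = dim_row B" and p: "p permutes {0..<dim_row A}"
    and e: "\<forall>i<dim_row A. \<forall>j<dim_row A. B $$ (p i, p j) = A $$ (i,j)"
    unfolding isomorphic_sd_def by blast
  define d' where "d' = dim_row A"
  have bij: "bij_betw p {0..<d'} {0..<d'}" using p permutes_imp_bij unfolding d'_def by blast
  have "W A = (\<Sum>i\<in>{0..<d'}. \<Sum>j\<in>{0..<d'}. \<bar>B $$ (p i, p j)\<bar>)"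
    unfolding W_def d'_def lessThan_atLeast0 using e by simp
  also have "\<dots> = (\<Sum>i\<in>{0..<d'}. \<Sum>j\<in>{0..<d'}. \<bar>B $$ (p i, j)\<bar>)"
    by (rule sum.cong[OF refl], rule sum.reindex_bij_betw[OF bij, of "\<lambda>j. \<bar>B $$ (p _, j)\<bar>"])
  also have "\<dots> = (\<Sum>i\<in>{0..<d'}. \<Sum>j\<in>{0..<d'}. \<bar>B $$ (i, j)\<bar>)"
    by (rule sum.reindex_bij_betw[OF bij, of "\<lambda>i. \<Sum>j\<in>{0..<d'}. \<bar>B $$ (i, j)\<bar>"])
  also have "\<dots> = W B" unfolding W_def d'_def d lessThan_atLeast0 ..
  finally show ?thesis .
qed

lemma W_Am: "W (Am k m) = 4 * (\<Sum>x<m. \<Sum>y<m. Bk k x y)"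
proof -
  have "W (Am k m) = (\<Sum>i<2*m. \<Sum>j<2*m. Bk k (i div 2) (j div 2))"
    unfolding W_def by (auto simp: Am_def abs_mult sg_def Bk_def intro!: sum.cong)
  also have "\<dots> = (\<Sum>i<2*m. \<Sum>y<m. 2 * Bk k (i div 2) y)"
    by (simp add: pair_sum)
  also have "\<dots> = (\<Sum>x<m. \<Sum>y<m. 4 * Bk k x y)"
    by (simp add: pair_sum sum.distrib[symmetric])
  finally show ?thesis by (simp add: sum_distrib_left)
qed

lemma Bk_sum: assumes "k < m"
  shows "(\<Sum>x<m. \<Sum>y<m. Bk k x y) = (\<Sum>x<m. \<Sum>y<m. Bk 0 x y) - int k"
proof -
  define D where "D (x::nat) (y::nat) = (if x = 0 \<and> 1 \<le> y \<and> y \<le> k then 1 else (0::int))" for x y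
  have B: "Bk k x y = Bk 0 x y - D x y" for x y by (auto simp: Bk_def D_def)
  have "(\<Sum>x<m. \<Sum>y<m. D x y) = (\<Sum>y<m. D 0 y)"
  proof -
    have "(\<Sum>x<m. \<Sum>y<m. D x y) = (\<Sum>x<m. if x = 0 then (\<Sum>y<m. D 0 y) else 0)"
      by (rule sum.cong) (auto simp: D_def)
    also have "\<dots> = (\<Sum>y<m. D 0 y)" using assms by simp
    finally show ?thesis .
  qed
  also have "\<dots> = int (card ({..<m} \<inter> {y. 1 \<le> y \<and> y \<le> k}))"
    unfolding D_def by (simp add: sum.If_cases)
  also have "{..<m} \<inter> {y. 1 \<le> y \<and> y \<le> k} = {1..k}" using assms by auto
  finally have "(\<Sum>x<m. \<Sum>y<m. D x y) = int k" by simp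
  thus ?thesis unfolding B by (simp add: sum_subtractf)
qed


lemma pow_bound: "4 \<le> n \<Longrightarrow> 2*n + 8 \<le> (4::nat)^n"
proof (induction n rule: nat_induct_at_least)
  case base then show ?case by simp
next
  case (Suc n) then show ?case by simp
qed

theorem theorem2p11:
  fixes n :: nat
  assumes "n \<ge> 4"
  shows "\<exists>G :: nat \<Rightarrow> int mat.
           (\<forall>k<n. sidigraph (4 ^ n) (G k)) \<and>
           (\<forall>k<n. \<forall>l<n. k \<noteq> l \<longrightarrow> \<not> isomorphic_sd (G k) (G l)) \<and>
           (\<forall>k<n. \<forall>l<n. cospectral (G k) (G l)) \<and>
           (\<forall>k<n. integral_spectrum (G k)) \<and>
           (\<forall>k<n. strongly_connected (G k)) \<and>
           (\<forall>k<n. \<not> symmetric_sd (G k)) \<and>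
           (\<forall>k<n. \<not> cycle_balanced (G k))"
proof -
  define m where "m = (4::nat)^n div 2"
  have "even ((4::nat)^n)" using assms by simp
  hence N: "2*m = 4^n" unfolding m_def by simp
  have mb: "n + 4 \<le> m" using pow_bound[OF assms] using N by linarith
  let ?G = "\<lambda>k. Am k m"
  have s1: "\<forall>k<n. sidigraph (4 ^ n) (?G k)" unfolding N[symmetric] using Am_sidigraph by blast
  have s2: "\<forall>k<n. \<forall>l<n. k \<noteq> l \<longrightarrow> \<not> isomorphic_sd (?G k) (?G l)"
  proof (intro allI impI notI)
    fix k l assume kl: "k < n" "l < n" "k \<noteq> l" and iso: "isomorphic_sd (?G k) (?G l)"
    have "W (?G k) = W (?G l)" by (rule iso_W[OF iso])
    moreover have "k < m" "l < m" using kl mb by auto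
    ultimately have "int k = int l" unfolding W_Am Bk_sum[OF \<open>k < m\<close>] Bk_sum[OF \<open>l < m\<close>] by simp
    thus False using kl by simp
  qed
  have s3: "\<forall>k<n. \<forall>l<n. cospectral (?G k) (?G l)" by (simp add: cospectral_def Am_spec)
  have s4: "\<forall>k<n. integral_spectrum (?G k)" by (simp add: integral_spectrum_def Am_spec)
  have s5: "\<forall>k<n. strongly_connected (?G k)" using mb by (auto intro!: Am_sc)
  have s6: "\<forall>k<n. \<not> symmetric_sd (?G k)" using mb by (auto intro!: Am_nsym)
  have s7: "\<forall>k<n. \<not> cycle_balanced (?G k)" using mb by (auto intro!: Am_nbal)
  show ?thesis by (rule exI[of _ ?G]) (intro conjI s1 s2 s3 s4 s5 s6 s7)
qed

end
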